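(* Let $\mathbb{F}_q$ be a finite field, let $(\star)$ be an arbitrary (not necessarily balanced) linear system over $\mathbb{F}_q$ with coefficient matrix $A\in\mathbb{F}_q^{m\times k}$, and let $b_1,\dots,b_l\in\mathbb{F}_q\setminus\{0\}$ with $b_1+\dots+b_l=0$. Then there are constants $\beta,\gamma\ge1$ with $\gamma<q$ such that, for every $n$ and every subset $S\subseteq\mathbb{F}_q^n$ with $|S|\ge\beta\gamma^n$, there is a linearly generic solution $(y_1,\dots,y_k)$ of $(\star)$ with all $y_j$ in the set $\big(b_1\cdot S\,\dot+_{\mathrm{aff}}\cdots\dot+_{\mathrm{aff}}\,b_l\cdot S\big)\cup\{0\}$.
   Context: For $S_1,\dots,S_l\subseteq\mathbb{F}_q^n$, the affinely independent restricted sumset is $S_1\dot+_{\mathrm{aff}}\cdots\dot+_{\mathrm{aff}}S_l:=\{x_1+\cdots+x_l: x_1\in S_1,\dots,x_l\in S_l \text{ affinely independent}\}$, and $b\cdot S=\{bx:x\in S\}$. A solution of $(\star)$ is a tuple $(y_1,\dots,y_k)\in(\mathbb{F}_q^n)^k$ with $\sum_j a_{ij}y_j=0$ for all $i\in[m]$. It is linearly generic if every linear equation $c_1y_1+\dots+c_ky_k=0$ ($c\in\mathbb{F}_q^k$) that it satisfies has $c$ in the row space of $A$. *)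

theory Defs
  imports Complex_Main
begin

text \<open>Vectors of F_q^n are represented as functions nat => 'a vanishing outside {..<n}.\<close>

definition fvecs :: "nat \<Rightarrow> (nat \<Rightarrow> 'a::zero) set" where
  "fvecs n = {v. \<forall>i\<ge>n. v i = 0}"

definition vscale :: "'a::times \<Rightarrow> (nat \<Rightarrow> 'a) \<Rightarrow> (nat \<Rightarrow> 'a)" where
  "vscale c v = (\<lambda>t. c * v t)"

definition vsum :: "'b set \<Rightarrow> ('b \<Rightarrow> nat \<Rightarrow> 'a::comm_monoid_add) \<Rightarrow> (nat \<Rightarrow> 'a)" where
  "vsum I f = (\<lambda>t. \<Sum>i\<in>I. f i t)"

definition set_scale :: "'a::times \<Rightarrow> (nat \<Rightarrow> 'a) set \<Rightarrow> (nat \<Rightarrow> 'a) set" where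
  "set_scale b S = vscale b ` S"

definition aff_indep :: "nat \<Rightarrow> (nat \<Rightarrow> nat \<Rightarrow> 'a::field) \<Rightarrow> bool" where
  "aff_indep l x \<longleftrightarrow>
     (\<forall>c. (\<Sum>i<l. c i) = 0 \<and> vsum {..<l} (\<lambda>i. vscale (c i) (x i)) = (\<lambda>_. 0)
          \<longrightarrow> (\<forall>i<l. c i = 0))"

definition aff_sumset :: "nat \<Rightarrow> (nat \<Rightarrow> (nat \<Rightarrow> 'a::field) set) \<Rightarrow> (nat \<Rightarrow> 'a) set" where
  "aff_sumset l Ss = {vsum {..<l} x | x. (\<forall>i<l. x i \<in> Ss i) \<and> aff_indep l x}"

definition is_solution :: "nat \<Rightarrow> nat \<Rightarrow> (nat \<Rightarrow> nat \<Rightarrow> 'a::field) \<Rightarrow> (nat \<Rightarrow> nat \<Rightarrow> 'a) \<Rightarrow> bool" where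
  "is_solution m k A y \<longleftrightarrow>
     (\<forall>i<m. vsum {..<k} (\<lambda>j. vscale (A i j) (y j)) = (\<lambda>_. 0))"

definition lin_generic :: "nat \<Rightarrow> nat \<Rightarrow> (nat \<Rightarrow> nat \<Rightarrow> 'a::field) \<Rightarrow> (nat \<Rightarrow> nat \<Rightarrow> 'a) \<Rightarrow> bool" where
  "lin_generic m k A y \<longleftrightarrow>
     (\<forall>c. vsum {..<k} (\<lambda>j. vscale (c j) (y j)) = (\<lambda>_. 0)
          \<longrightarrow> (\<exists>d. \<forall>j<k. c j = (\<Sum>i<m. d i * A i j)))"

end

theory Submission imports Defs "HOL-Library.Function_Algebras" "HOL-Library.FuncSet" begin

lemma card_ext:
  fixes k :: nat
  assumes "\<And>j. j < k \<Longrightarrow> finite (E j)"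
  shows "finite {f. (\<forall>j<k. f j \<in> E j) \<and> (\<forall>j\<ge>k. f j = d)} \<and>
         card {f. (\<forall>j<k. f j \<in> E j) \<and> (\<forall>j\<ge>k. f j = d)} = (\<Prod>j<k. card (E j))"
proof -
  let ?F = "{f. (\<forall>j<k. f j \<in> E j) \<and> (\<forall>j\<ge>k. f j = d)}"
  have bij: "bij_betw (\<lambda>f. restrict f {..<k}) ?F (PiE {..<k} E)"
  proof (rule bij_betwI[where g="\<lambda>g j. if j < k then g j else d"])
    show "(\<lambda>f. restrict f {..<k}) \<in> ?F \<rightarrow> PiE {..<k} E" by auto
    show "(\<lambda>g j. if j < k then g j else d) \<in> PiE {..<k} E \<rightarrow> ?F"
      by (auto simp: Pi_iff PiE_iff)
    show "\<And>x. x \<in> ?F \<Longrightarrow> (\<lambda>j. if j < k then restrict x {..<k} j else d) = x" by (auto simp: fun_eq_iff)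
    show "\<And>y. y \<in> PiE {..<k} E \<Longrightarrow> restrict (\<lambda>j. if j < k then y j else d) {..<k} = y"
      by (auto simp: fun_eq_iff PiE_def extensional_def)
  qed
  have fin: "finite (PiE {..<k} E)" using assms by (auto intro!: finite_PiE)
  have c: "card (PiE {..<k} E) = (\<Prod>j<k. card (E j))" by (rule card_PiE) simp
  show ?thesis using bij_betw_finite[OF bij] fin bij_betw_same_card[OF bij] c
    by simp
qed

lemma card_fvecs: "finite (fvecs n :: (nat \<Rightarrow> 'a::{finite,zero}) set) \<and> card (fvecs n :: (nat \<Rightarrow> 'a) set) = card (UNIV::'a set) ^ n"
proof -
  have "fvecs n = {f::nat\<Rightarrow>'a. (\<forall>j<n. f j \<in> UNIV) \<and> (\<forall>j\<ge>n. f j = 0)}" by (auto simp: fvecs_def)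
  then show ?thesis using card_ext[of n "\<lambda>_. UNIV::'a set" 0] by simp
qed

definition Vn :: "nat \<Rightarrow> nat \<Rightarrow> (nat \<Rightarrow> nat \<Rightarrow> 'a::zero) set" where
  "Vn n k = {y. (\<forall>j<k. y j \<in> fvecs n) \<and> (\<forall>j\<ge>k. y j = 0)}"

definition Wn :: "nat \<Rightarrow> nat \<Rightarrow> nat \<Rightarrow> (nat \<Rightarrow> nat \<Rightarrow> 'a::field) \<Rightarrow> (nat \<Rightarrow> nat \<Rightarrow> 'a) set" where
  "Wn n k m A = {y \<in> Vn n k. is_solution m k A y}"

definition W0 :: "nat \<Rightarrow> nat \<Rightarrow> (nat \<Rightarrow> nat \<Rightarrow> 'a::field) \<Rightarrow> (nat \<Rightarrow> 'a) set" where
  "W0 m k A = {w. (\<forall>j\<ge>k. w j = 0) \<and> (\<forall>i<m. (\<Sum>j<k. A i j * w j) = 0)}"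

definition Lc :: "nat \<Rightarrow> (nat \<Rightarrow> 'a::comm_ring) \<Rightarrow> (nat \<Rightarrow> nat \<Rightarrow> 'a) \<Rightarrow> nat \<Rightarrow> 'a" where
  "Lc k c y = (\<lambda>t. \<Sum>j<k. c j * y j t)"

lemma Vn_card: "finite (Vn n k :: (nat \<Rightarrow> nat \<Rightarrow> 'a::{finite,zero}) set) \<and>
   card (Vn n k :: (nat \<Rightarrow> nat \<Rightarrow> 'a) set) = (card (UNIV::'a set) ^ n) ^ k"
  using card_ext[of k "\<lambda>_. fvecs n :: (nat \<Rightarrow> 'a) set" 0] card_fvecs[where 'a='a, of n]
  by (simp add: Vn_def)

lemma is_solution_iff: "is_solution m k A y \<longleftrightarrow> (\<forall>i<m. \<forall>t. (\<Sum>j<k. A i j * y j t) = 0)"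
  by (auto simp: is_solution_def vsum_def vscale_def fun_eq_iff)

lemma Vn_iff: "y \<in> Vn n k \<longleftrightarrow> (\<forall>j t. (j \<ge> k \<or> t \<ge> n) \<longrightarrow> y j t = 0)"
  unfolding Vn_def fvecs_def fun_eq_iff by (auto, metis not_le)

lemma Wn_iff: "y \<in> Wn n k m A \<longleftrightarrow> (\<forall>j t. (j \<ge> k \<or> t \<ge> n) \<longrightarrow> y j t = 0) \<and>
    (\<forall>i<m. \<forall>t. (\<Sum>j<k. A i j * y j t) = 0)"
  by (simp add: Wn_def Vn_iff is_solution_iff)

lemma Wn_finite: "finite (Wn n k m (A :: nat \<Rightarrow> nat \<Rightarrow> 'a::{finite,field}))"
  using Vn_card[where 'a='a, of n k] by (rule_tac finite_subset[of _ "Vn n k"]) (auto simp: Wn_def)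

lemma Wn_comb:
  assumes "\<forall>i<l. u i \<in> Wn n k m A"
  shows "(\<lambda>j t. \<Sum>i<l. b i * u i j t) \<in> Wn n k m A"
proof -
  have "(\<Sum>j<k. A i' j * (\<Sum>i<l. b i * u i j t)) = (\<Sum>i<l. b i * (\<Sum>j<k. A i' j * u i j t))" for i' t
    by (simp add: sum_distrib_left sum.swap[of _ "{..<k}"] algebra_simps)
  then show ?thesis using assms by (simp add: Wn_iff)
qed

lemma Wn_add: "u \<in> Wn n k m A \<Longrightarrow> w \<in> Wn n k m A \<Longrightarrow> u + w \<in> Wn n k m A"
  by (simp add: Wn_iff sum.distrib algebra_simps)

lemma Wn_diff: "u \<in> Wn n k m A \<Longrightarrow> w \<in> Wn n k m A \<Longrightarrow> u - w \<in> Wn n k m A"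
  by (simp add: Wn_iff sum_subtractf algebra_simps)

lemma Wn_zero: "0 \<in> Wn n k m A"
  by (simp add: Wn_iff)

lemma Lc_fvecs: "y \<in> Wn n k m A \<Longrightarrow> Lc k c y \<in> fvecs n"
  by (simp add: Wn_iff Lc_def fvecs_def)

lemma Lc_add: "Lc k c (u + w) = Lc k c u + Lc k c w"
  by (simp add: Lc_def fun_eq_iff sum.distrib algebra_simps)

lemma Lc_diff: "Lc k c (u - w) = Lc k c u - Lc k c w"
  by (simp add: Lc_def fun_eq_iff sum_subtractf algebra_simps)

lemma fiber:
  fixes A :: "nat \<Rightarrow> nat \<Rightarrow> 'a::{finite,field}"
  assumes w0: "w0 \<in> W0 m k A" and nz: "(\<Sum>j<k. e j * w0 j) \<noteq> 0"
  shows "\<forall>v\<in>fvecs n. \<exists>w\<in>Wn n k m A. Lc k e w = v"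
    and "card {w\<in>Wn n k m A. Lc k e w = 0} * card (UNIV::'a set) ^ n = card (Wn n k m A)"
proof -
  define s where "s = (\<Sum>j<k. e j * w0 j)"
  define ws where "ws v = (\<lambda>j t. w0 j * v t / s)" for v :: "nat \<Rightarrow> 'a"
  have ws_in: "ws v \<in> Wn n k m A" if "v \<in> fvecs n" for v
  proof -
    have "(\<Sum>j<k. A i j * (w0 j * v t / s)) = (\<Sum>j<k. A i j * w0 j) * v t / s" for i t
      by (simp only: sum_distrib_right sum_divide_distrib) (simp add: algebra_simps)
    then show ?thesis using w0 that by (auto simp: Wn_iff ws_def W0_def fvecs_def)
  qed
  have ws_L: "Lc k e (ws v) = v" for v
  proof -
    have "(\<Sum>j<k. e j * (w0 j * v t / s)) = s * v t / s" for t
      unfolding s_def by (simp only: sum_distrib_right sum_divide_distrib) (simp add: algebra_simps)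
    then show ?thesis using nz by (simp add: Lc_def ws_def s_def fun_eq_iff)
  qed
  show "\<forall>v\<in>fvecs n. \<exists>w\<in>Wn n k m A. Lc k e w = v" using ws_in ws_L by blast
  define K where "K = {w\<in>Wn n k m A. Lc k e w = 0}"
  define F where "F v = {w\<in>Wn n k m A. Lc k e w = v}" for v
  have cF: "card (F v) = card K" if v: "v \<in> fvecs n" for v
  proof -
    have "bij_betw (\<lambda>w. w + ws v) K (F v)"
    proof (rule bij_betwI[where g="\<lambda>w. w - ws v"])
      show "(\<lambda>w. w + ws v) \<in> K \<rightarrow> F v" using ws_in[OF v] ws_L
        by (auto simp: K_def F_def Wn_add Lc_add)
      show "(\<lambda>w. w - ws v) \<in> F v \<rightarrow> K" using ws_in[OF v] ws_L
        by (auto simp: K_def F_def Wn_diff Lc_diff)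
    qed auto
    then show ?thesis by (simp add: bij_betw_same_card)
  qed
  have WU: "Wn n k m A = (\<Union>v\<in>fvecs n. F v)" using Lc_fvecs by (auto simp: F_def)
  have finF: "finite (F v)" for v using Wn_finite[of n k m A] by (simp add: F_def)
  have "card (Wn n k m A) = (\<Sum>v\<in>fvecs n. card (F v))"
    unfolding WU by (rule card_UN_disjoint) (use finF card_fvecs in \<open>auto simp: F_def\<close>)
  also have "\<dots> = (\<Sum>(v::nat\<Rightarrow>'a)\<in>fvecs n. card K)" using cF by simp
  also have "\<dots> = card K * card (UNIV::'a set) ^ n" using card_fvecs[where 'a='a, of n] by (simp add: mult.commute)
  finally show "card {w\<in>Wn n k m A. Lc k e w = 0} * card (UNIV::'a set) ^ n = card (Wn n k m A)"
    by (simp add: K_def)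
qed

lemma sum_unit: fixes k :: nat shows "(\<Sum>j<k. f j * (if j = a then 1 else 0)) = (if a < k then f a else (0::'a::comm_semiring_1))"
proof -
  have "(\<Sum>j<k. f j * (if j = a then 1 else 0)) = (\<Sum>j<k. if j = a then f j else 0)"
    by (rule sum.cong) auto
  then show ?thesis by (simp add: sum.delta)
qed

lemma duality:
  fixes R :: "nat \<Rightarrow> nat \<Rightarrow> 'a::field" and k :: nat
  shows "(\<forall>w. (\<forall>i<m. (\<Sum>j<k. R i j * w j) = 0) \<longrightarrow> (\<Sum>j<k. c j * w j) = 0) \<Longrightarrow>
         \<exists>d. \<forall>j<k. c j = (\<Sum>i<m. d i * R i j)"
proof (induction k arbitrary: R c)
  case 0 then show ?case by auto
next
  case (Suc k)
  note H = Suc.prems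
  show ?case
  proof (cases "\<exists>p<m. R p k \<noteq> 0")
    case False
    then have Rk: "\<forall>i<m. R i k = 0" by auto
    have ck: "c k = 0"
    proof -
      define w where "w = (\<lambda>j::nat. if j = k then (1::'a) else 0)"
      have "\<forall>i<m. (\<Sum>j<Suc k. R i j * w j) = 0" using Rk by (simp add: w_def sum_unit)
      then have "(\<Sum>j<Suc k. c j * w j) = 0" using H by blast
      then show ?thesis by (simp add: w_def sum_unit)
    qed
    have IH': "\<forall>w. (\<forall>i<m. (\<Sum>j<k. R i j * w j) = 0) \<longrightarrow> (\<Sum>j<k. c j * w j) = 0"
    proof (intro allI impI)
      fix w :: "nat \<Rightarrow> 'a" assume a: "\<forall>i<m. (\<Sum>j<k. R i j * w j) = 0"
      define w' where "w' = w(k := 0)"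
      have e: "(\<Sum>j<k. f j * w' j) = (\<Sum>j<k. f j * w j)" for f by (rule sum.cong) (auto simp: w'_def)
      have wk: "w' k = 0" by (simp add: w'_def)
      have "\<forall>i<m. (\<Sum>j<Suc k. R i j * w' j) = 0" using a by (simp add: e wk)
      then have "(\<Sum>j<Suc k. c j * w' j) = 0" using H by blast
      then show "(\<Sum>j<k. c j * w j) = 0" by (simp add: e wk)
    qed
    from Suc.IH[OF IH'] obtain d where d: "\<forall>j<k. c j = (\<Sum>i<m. d i * R i j)" by blast
    have "\<forall>j<Suc k. c j = (\<Sum>i<m. d i * R i j)"
    proof (intro allI impI)
      fix j assume "j < Suc k"
      then consider "j < k" | "j = k" by linarith
      then show "c j = (\<Sum>i<m. d i * R i j)"
      proof cases
        case 1 then show ?thesis using d by blast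
      next
        case 2 then show ?thesis using ck Rk by simp
      qed
    qed
    then show ?thesis by blast
  next
    case True
    then obtain p where p: "p < m" "R p k \<noteq> 0" by blast
    define R' where "R' i j = R i j - (R i k / R p k) * R p j" for i j
    define c' where "c' j = c j - (c k / R p k) * R p j" for j
    have R'k: "R' i k = 0" for i using p by (simp add: R'_def)
    have c'k: "c' k = 0" using p by (simp add: c'_def)
    have IH': "\<forall>w. (\<forall>i<m. (\<Sum>j<k. R' i j * w j) = 0) \<longrightarrow> (\<Sum>j<k. c' j * w j) = 0"
    proof (intro allI impI)
      fix w :: "nat \<Rightarrow> 'a" assume a: "\<forall>i<m. (\<Sum>j<k. R' i j * w j) = 0"
      define w' where "w' = w(k := - (\<Sum>j<k. R p j * w j) / R p k)"
      have ew: "(\<Sum>j<k. f j * w' j) = (\<Sum>j<k. f j * w j)" for f by (rule sum.cong) (auto simp: w'_def)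
      have wk: "w' k = - (\<Sum>j<k. R p j * w j) / R p k" by (simp add: w'_def)
      have Rp0: "(\<Sum>j<Suc k. R p j * w' j) = 0" using p by (simp add: ew wk)
      have dec: "(\<Sum>j<Suc k. R' i j * w' j) = (\<Sum>j<Suc k. R i j * w' j) - (R i k / R p k) * (\<Sum>j<Suc k. R p j * w' j)" for i
        by (simp only: sum_distrib_left sum_subtractf[symmetric]) (rule sum.cong, auto simp: R'_def algebra_simps)
      have dec2: "(\<Sum>j<Suc k. R' i j * w' j) = (\<Sum>j<k. R' i j * w j)" for i
        by (simp add: ew R'k)
      have "\<forall>i<m. (\<Sum>j<Suc k. R i j * w' j) = 0"
      proof (intro allI impI)
        fix i assume "i < m"
        then have "(\<Sum>j<Suc k. R' i j * w' j) = 0" using a dec2 by simp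
        then show "(\<Sum>j<Suc k. R i j * w' j) = 0" using dec[of i] Rp0 by simp
      qed
      then have c0: "(\<Sum>j<Suc k. c j * w' j) = 0" using H by blast
      have "(\<Sum>j<Suc k. c' j * w' j) = (\<Sum>j<Suc k. c j * w' j) - (c k / R p k) * (\<Sum>j<Suc k. R p j * w' j)"
        by (simp only: sum_distrib_left sum_subtractf[symmetric]) (rule sum.cong, auto simp: c'_def algebra_simps)
      also have "\<dots> = 0" using c0 Rp0 by simp
      finally show "(\<Sum>j<k. c' j * w j) = 0" by (simp add: ew c'k)
    qed
    from Suc.IH[OF IH'] obtain d' where d': "\<forall>j<k. c' j = (\<Sum>i<m. d' i * R' i j)" by blast
    define lam where "lam = (c k - (\<Sum>i<m. d' i * R i k)) / R p k"
    define d where "d i = d' i + (if i = p then lam else 0)" for i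
    have dsum: "(\<Sum>i<m. d i * R i j) = (\<Sum>i<m. d' i * R i j) + lam * R p j" for j
    proof -
      have "(\<Sum>i<m. d i * R i j) = (\<Sum>i<m. d' i * R i j + (if i = p then lam * R p j else 0))"
        by (rule sum.cong) (auto simp: d_def algebra_simps)
      then show ?thesis using p by (simp add: sum.distrib)
    qed
    have d'sum: "(\<Sum>i<m. d' i * R' i j) = (\<Sum>i<m. d' i * R i j) - (\<Sum>i<m. d' i * R i k) / R p k * R p j" for j
      by (simp add: R'_def right_diff_distrib sum_subtractf sum_distrib_right sum_divide_distrib mult.assoc)
    have "\<forall>j<Suc k. c j = (\<Sum>i<m. d i * R i j)"
    proof (intro allI impI)
      fix j assume "j < Suc k"
      then consider "j < k" | "j = k" by linarith
      then show "c j = (\<Sum>i<m. d i * R i j)"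
      proof cases
        case 1
        then have "c' j = (\<Sum>i<m. d' i * R' i j)" using d' by blast
        then have "c j = (\<Sum>i<m. d' i * R i j) - (\<Sum>i<m. d' i * R i k) / R p k * R p j + (c k / R p k) * R p j"
          by (simp add: c'_def d'sum algebra_simps)
        then show ?thesis by (simp add: dsum lam_def algebra_simps diff_divide_distrib)
      next
        case 2 then show ?thesis using p by (simp add: dsum lam_def)
      qed
    qed
    then show ?thesis by blast
  qed
qed

lemma count_gen:
  fixes A :: "nat \<Rightarrow> nat \<Rightarrow> 'a::{finite,field}" and e :: "nat \<Rightarrow> 'a" and l i0 :: nat
  assumes w0: "w0 \<in> W0 m k A" and nz: "(\<Sum>j<k. e j * w0 j) \<noteq> 0" and i0: "i0 < l"
    and P: "P \<subseteq> Wn n k m A"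
    and Gin: "\<forall>u\<in>PiE {..<l} (\<lambda>_. P). G u \<in> fvecs n"
    and Gind: "\<forall>u u'. (\<forall>i. i \<noteq> i0 \<longrightarrow> u i = u' i) \<longrightarrow> G u = G u'"
  shows "card {u \<in> PiE {..<l} (\<lambda>_. P). Lc k e (u i0) = G u} * card (UNIV::'a set) ^ n
         \<le> card (Wn n k m A) * card P ^ (l - 1)"
proof -
  define K where "K = {w\<in>Wn n k m A. Lc k e w = 0}"
  have cK: "card K * card (UNIV::'a set) ^ n = card (Wn n k m A)"
    using fiber(2)[OF w0 nz, of n] by (simp add: K_def)
  have ex: "\<forall>v\<in>fvecs n. \<exists>w\<in>Wn n k m A. Lc k e w = v" using fiber(1)[OF w0 nz] by blast
  define ws where "ws v = (SOME w. w \<in> Wn n k m A \<and> Lc k e w = v)" for v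
  have ws: "ws v \<in> Wn n k m A \<and> Lc k e (ws v) = v" if "v \<in> fvecs n" for v
  proof -
    have "\<exists>w. w \<in> Wn n k m A \<and> Lc k e w = v" using ex that by blast
    then show ?thesis unfolding ws_def by (rule someI_ex)
  qed
  define B where "B = {u \<in> PiE {..<l} (\<lambda>_. P). Lc k e (u i0) = G u}"
  define Psi where "Psi u = u(i0 := u i0 - ws (G u))" for u
  have inj: "inj_on Psi B"
  proof (rule inj_onI)
    fix u u' assume "u \<in> B" "u' \<in> B" and eq: "Psi u = Psi u'"
    have o: "\<forall>i. i \<noteq> i0 \<longrightarrow> u i = u' i"
    proof (intro allI impI)
      fix i assume "i \<noteq> i0"
      then show "u i = u' i" using fun_cong[OF eq, of i] by (simp add: Psi_def)
    qed
    then have "G u = G u'" using Gind by blast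
    moreover have "u i0 - ws (G u) = u' i0 - ws (G u')" using fun_cong[OF eq, of i0] by (simp add: Psi_def)
    ultimately have "u i0 = u' i0" by simp
    with o show "u = u'" by (metis ext)
  qed
  define E where "E i = (if i = i0 then K else P)" for i
  have img: "Psi ` B \<subseteq> PiE {..<l} E"
  proof
    fix x assume "x \<in> Psi ` B"
    then obtain u where u: "u \<in> B" and x: "x = Psi u" by blast
    have uP: "u \<in> PiE {..<l} (\<lambda>_. P)" and uL: "Lc k e (u i0) = G u" using u by (auto simp: B_def)
    have G: "G u \<in> fvecs n" using Gin uP by blast
    have ui0: "u i0 \<in> Wn n k m A" using uP P i0 by (auto simp: PiE_iff)
    have "u i0 - ws (G u) \<in> K" using ws[OF G] ui0 uL by (simp add: K_def Wn_diff Lc_diff)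
    then show "x \<in> PiE {..<l} E" using uP i0 unfolding x Psi_def E_def
      by (auto simp: PiE_iff extensional_def)
  qed
  have finW: "finite (Wn n k m A)" by (rule Wn_finite)
  have finK: "finite K" using finW by (simp add: K_def)
  have finP: "finite P" using finW P finite_subset by blast
  have finE: "finite (PiE {..<l} E)" using finK finP by (auto intro!: finite_PiE simp: E_def)
  have "card B = card (Psi ` B)" using inj by (simp add: card_image)
  also have "\<dots> \<le> card (PiE {..<l} E)" using card_mono[OF finE img] .
  also have "\<dots> = (\<Prod>i<l. card (E i))" by (rule card_PiE) simp
  also have "\<dots> = card (E i0) * (\<Prod>i\<in>{..<l} - {i0}. card (E i))"
    using i0 by (subst prod.remove[of _ i0]) auto
  also have "\<dots> = card K * card P ^ (l - 1)"
    using i0 by (simp add: E_def)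
  finally have "card B \<le> card K * card P ^ (l - 1)" .
  then have "card B * card (UNIV::'a set) ^ n \<le> card K * card P ^ (l - 1) * card (UNIV::'a set) ^ n"
    by simp
  also have "\<dots> = card (Wn n k m A) * card P ^ (l - 1)" using cK by (simp add: algebra_simps)
  finally show ?thesis by (simp add: B_def)
qed

lemma card_filter_sum: "finite S \<Longrightarrow> card {x\<in>S. P x} = (\<Sum>x\<in>S. if P x then 1 else 0)"
  by (simp add: sum.inter_filter[symmetric])

lemma pigeon:
  fixes A :: "nat \<Rightarrow> nat \<Rightarrow> 'a::{finite,field}"
  assumes Z: "Z \<subseteq> Vn n k"
  shows "\<exists>a\<in>Vn n k. card (Wn n k m A) * card Z \<le> card (Vn n k :: (nat \<Rightarrow> nat \<Rightarrow> 'a) set) * card {w\<in>Wn n k m A. a + w \<in> Z}"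
proof -
  let ?V = "Vn n k :: (nat \<Rightarrow> nat \<Rightarrow> 'a) set" and ?W = "Wn n k m A"
  have finV: "finite ?V" using Vn_card by blast
  have finW: "finite ?W" by (rule Wn_finite)
  have finZ: "finite Z" using Z finV finite_subset by blast
  have WV: "?W \<subseteq> ?V" by (auto simp: Wn_def)
  have cw: "card {a\<in>?V. a + w \<in> Z} = card Z" if w: "w \<in> ?W" for w
  proof -
    have "bij_betw (\<lambda>a. a + w) {a\<in>?V. a + w \<in> Z} Z"
    proof (rule bij_betwI[where g="\<lambda>z. z - w"])
      show "(\<lambda>z. z - w) \<in> Z \<rightarrow> {a\<in>?V. a + w \<in> Z}"
      proof
        fix z assume "z \<in> Z"
        then have "z \<in> ?V" "w \<in> ?V" using Z WV w by auto
        then have "z - w \<in> ?V" by (simp add: Vn_iff)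
        then show "z - w \<in> {a\<in>?V. a + w \<in> Z}" using \<open>z \<in> Z\<close> by simp
      qed
    qed auto
    then show ?thesis by (simp add: bij_betw_same_card)
  qed
  have "(\<Sum>a\<in>?V. card {w\<in>?W. a + w \<in> Z}) = (\<Sum>a\<in>?V. \<Sum>w\<in>?W. if a + w \<in> Z then 1 else 0)"
    using finW by (simp add: card_filter_sum)
  also have "\<dots> = (\<Sum>w\<in>?W. \<Sum>a\<in>?V. if a + w \<in> Z then 1 else 0)" by (rule sum.swap)
  also have "\<dots> = (\<Sum>w\<in>?W. card {a\<in>?V. a + w \<in> Z})" using finV by (simp add: card_filter_sum)
  also have "\<dots> = (\<Sum>w\<in>?W. card Z)" using cw by simp
  also have "\<dots> = card ?W * card Z" by simp
  finally have S: "(\<Sum>a\<in>?V. card {w\<in>?W. a + w \<in> Z}) = card ?W * card Z" .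
  show ?thesis
  proof (rule ccontr)
    assume "\<not> ?thesis"
    then have lt: "\<forall>a\<in>?V. card ?V * card {w\<in>?W. a + w \<in> Z} < card ?W * card Z" by (auto simp: not_le)
    have ne: "?V \<noteq> {}" using Wn_zero WV by blast
    have "(\<Sum>a\<in>?V. card ?V * card {w\<in>?W. a + w \<in> Z}) < (\<Sum>a\<in>?V. card ?W * card Z)"
      using finV ne lt by (intro sum_strict_mono) auto
    then have "card ?V * (card ?W * card Z) < card ?V * (card ?W * card Z)"
      by (simp add: sum_distrib_left[symmetric] S)
    then show False by simp
  qed
qed

lemma card_UN_mult:
  assumes "finite I" "\<forall>i\<in>I. card (F i) * Q \<le> M" "card I \<le> N"
  shows "card (\<Union>i\<in>I. F i) * Q \<le> N * (M::nat)"
proof -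
  have "card (\<Union>i\<in>I. F i) * Q \<le> (\<Sum>i\<in>I. card (F i)) * Q"
    using card_UN_le[OF assms(1), of F] by simp
  also have "\<dots> = (\<Sum>i\<in>I. card (F i) * Q)" by (simp add: sum_distrib_right)
  also have "\<dots> \<le> (\<Sum>i\<in>I. M)" using assms(2) by (intro sum_mono) auto
  also have "\<dots> = card I * M" by simp
  also have "\<dots> \<le> N * M" using assms(3) by simp
  finally show ?thesis .
qed

lemma real_part:
  fixes q k D :: nat
  assumes q: "q \<ge> 2" and k: "k \<ge> 1"
  shows "1 \<le> real q * (1 - 1 / (2 * real k))" "real q * (1 - 1 / (2 * real k)) < real q"
    and "real s \<ge> (real D + 1) * (real q * (1 - 1 / (2 * real k))) ^ n \<Longrightarrow> D * q ^ (n * (k - 1)) < s ^ k"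
proof -
  define g where "g = real q * (1 - 1 / (2 * real k))"
  define b where "b = real D + 1"
  have hk: "1 / (2 * real k) \<le> 1/2" using k by (simp add: field_simps)
  have hk0: "0 < 1 / (2 * real k)" using k by simp
  show g1: "1 \<le> real q * (1 - 1 / (2 * real k))"
  proof -
    have "1 \<le> 2 * (1/2::real)" by simp
    also have "\<dots> \<le> real q * (1 - 1 / (2 * real k))" using q hk by (intro mult_mono) auto
    finally show ?thesis .
  qed
  show "real q * (1 - 1 / (2 * real k)) < real q" using q hk0 by (simp add: algebra_simps)
  assume s: "real s \<ge> (real D + 1) * (real q * (1 - 1 / (2 * real k))) ^ n"
  have bern: "1 + real k * (- (1 / (2 * real k))) \<le> (1 + (- (1 / (2 * real k)))) ^ k"
    by (rule Bernoulli_inequality) (use hk in simp)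
  have "1 + real k * (- (1 / (2 * real k))) = 1/2" using k by (simp add: field_simps)
  then have bk: "1/2 \<le> (1 - 1 / (2 * real k)) ^ k" using bern by simp
  have qk: "real q ^ k = real q * real q ^ (k - 1)" using k by (metis One_nat_def Suc_pred less_eq_Suc_le power_Suc)
  have gk: "real q ^ (k - 1) \<le> g ^ k"
  proof -
    have "real q ^ (k - 1) \<le> real q ^ k / 2" using q qk by simp
    also have "\<dots> = real q ^ k * (1/2)" by simp
    also have "\<dots> \<le> real q ^ k * (1 - 1 / (2 * real k)) ^ k" using bk by (intro mult_left_mono) auto
    also have "\<dots> = g ^ k" by (simp add: g_def power_mult_distrib)
    finally show ?thesis .
  qed
  have b1: "1 \<le> b" by (simp add: b_def)
  have bkb: "b \<le> b ^ k" using power_increasing[OF k b1] by simp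
  have g0: "0 \<le> g" using g1 by (simp add: g_def)
  have "real (D * q ^ (n * (k - 1))) = real D * (real q ^ (k - 1)) ^ n"
    by (simp add: power_mult[symmetric] mult.commute)
  also have "\<dots> < b * (real q ^ (k - 1)) ^ n" using q by (simp add: b_def)
  also have "\<dots> \<le> b ^ k * (g ^ k) ^ n" using bkb gk b1 by (intro mult_mono power_mono) auto
  also have "\<dots> = (b * g ^ n) ^ k" by (simp add: power_mult_distrib power_mult[symmetric] mult.commute)
  also have "\<dots> \<le> real s ^ k" using s b1 g0 by (intro power_mono) (auto simp: b_def g_def)
  also have "\<dots> = real (s ^ k)" by simp
  finally show "D * q ^ (n * (k - 1)) < s ^ k" by linarith
qed

lemma main_count:
  fixes A :: "nat \<Rightarrow> nat \<Rightarrow> 'a::{finite,field}" and b :: "nat \<Rightarrow> 'a" and S :: "(nat \<Rightarrow> 'a) set"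
  assumes l: "l \<ge> 1" and bnz: "\<forall>i<l. b i \<noteq> 0" and bsum: "(\<Sum>i<l. b i) = 0"
    and S: "S \<subseteq> fvecs n" and k: "k \<ge> 1"
    and big: "(card (UNIV::'a set) ^ k + k * l * card (UNIV::'a set) ^ l) * card (UNIV::'a set) ^ (n * (k - 1)) < card S ^ k"
  shows "\<exists>y. is_solution m k A y \<and> lin_generic m k A y \<and>
             (\<forall>j<k. y j \<in> aff_sumset l (\<lambda>i. set_scale (b i) S) \<union> {\<lambda>_. 0})"
proof -
  define q where "q = card (UNIV::'a set)"
  define D where "D = q ^ k + k * l * q ^ l"
  let ?W = "Wn n k m A"
  let ?V = "Vn n k :: (nat \<Rightarrow> nat \<Rightarrow> 'a) set"
  have q0: "q > 0" unfolding q_def by (simp add: finite_UNIV_card_ge_0)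
  have finS: "finite S" using S card_fvecs[where 'a='a] finite_subset by blast
  define Z where "Z = {z. (\<forall>j<k. z j \<in> S) \<and> (\<forall>j\<ge>k. z j = (0::nat\<Rightarrow>'a))}"
  have cZ: "card Z = card S ^ k" using card_ext[of k "\<lambda>_. S" 0] finS by (simp add: Z_def)
  have ZV: "Z \<subseteq> ?V" using S by (auto simp: Z_def Vn_def)
  obtain a where aV: "a \<in> ?V" and pa: "card ?W * card Z \<le> card ?V * card {w\<in>?W. a + w \<in> Z}"
    using pigeon[OF ZV, of m A] by blast
  define P where "P = {w\<in>?W. a + w \<in> Z}"
  have PW: "P \<subseteq> ?W" by (auto simp: P_def)
  have finW: "finite ?W" by (rule Wn_finite)
  have finP: "finite P" using finW PW finite_subset by blast
  have cW1: "card ?W \<ge> 1" using finW Wn_zero by (metis One_nat_def Suc_leI card_gt_0_iff empty_iff)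
  have cV: "card ?V = q ^ (n * (k - 1)) * q ^ n"
  proof -
    have "card ?V = (q ^ n) ^ k" using Vn_card[where 'a='a] by (simp add: q_def)
    also have "\<dots> = q ^ (n * (k - 1)) * q ^ n" using k
      by (metis (no_types, lifting) One_nat_def Suc_pred less_eq_Suc_le mult.commute power_Suc power_mult)
    finally show ?thesis .
  qed
  have key: "D * card ?W < card P * q ^ n"
  proof -
    have "D * card ?W * q ^ (n * (k - 1)) = card ?W * (D * q ^ (n * (k - 1)))" by simp
    also have "\<dots> < card ?W * card S ^ k" using big cW1 by (simp add: D_def q_def)
    also have "\<dots> \<le> card ?V * card P" using pa cZ by (simp add: P_def)
    also have "\<dots> = card P * q ^ n * q ^ (n * (k - 1))" using cV by simp
    finally show ?thesis using q0 by simp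
  qed
  define PU where "PU = PiE {..<l} (\<lambda>_. P)"
  have finPU: "finite PU" using finP by (auto simp: PU_def intro!: finite_PiE)
  have cPU: "card PU = card P ^ l" by (simp add: PU_def card_PiE)
  have uW: "u i \<in> ?W" if "u \<in> PU" "i < l" for u i using that PW by (auto simp: PU_def PiE_iff)
  have finC: "finite {c::nat\<Rightarrow>'a. \<forall>j\<ge>r. c j = 0} \<and> card {c::nat\<Rightarrow>'a. \<forall>j\<ge>r. c j = 0} = q ^ r" for r
    using card_ext[of r "\<lambda>_. UNIV::'a set" 0] by (simp add: q_def)
  define Cg where "Cg = {c\<in>{c::nat\<Rightarrow>'a. \<forall>j\<ge>k. c j = 0}. \<exists>w0\<in>W0 m k A. (\<Sum>j<k. c j * w0 j) \<noteq> 0}"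
  define G1 where "G1 c u = (\<lambda>t. - (\<Sum>i\<in>{..<l} - {0}. b i * Lc k c (u i) t) / b 0)" for c u
  define B1 where "B1 = (\<Union>c\<in>Cg. {u\<in>PU. Lc k c (u 0) = G1 c u})"
  have B1b: "card B1 * q ^ n \<le> q ^ k * (card ?W * card P ^ (l - 1))"
    unfolding B1_def
  proof (rule card_UN_mult)
    show "finite Cg" using finC[of k] by (simp add: Cg_def)
    show "card Cg \<le> q ^ k" using finC[of k] by (metis (no_types, lifting) Cg_def card_mono mem_Collect_eq subsetI)
    show "\<forall>c\<in>Cg. card {u \<in> PU. Lc k c (u 0) = G1 c u} * q ^ n \<le> card ?W * card P ^ (l - 1)"
    proof
      fix c assume "c \<in> Cg"
      then obtain w0 where w0: "w0 \<in> W0 m k A" "(\<Sum>j<k. c j * w0 j) \<noteq> 0" by (auto simp: Cg_def)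
      show "card {u \<in> PU. Lc k c (u 0) = G1 c u} * q ^ n \<le> card ?W * card P ^ (l - 1)"
        unfolding PU_def q_def
      proof (rule count_gen[OF w0 _ PW])
        show "0 < l" using l by simp
        show "\<forall>u\<in>PiE {..<l} (\<lambda>_. P). G1 c u \<in> fvecs n"
        proof
          fix u assume "u \<in> PiE {..<l} (\<lambda>_. P)"
          then have "\<forall>i<l. u i \<in> ?W" using PW by (auto simp: PiE_iff)
          then show "G1 c u \<in> fvecs n" by (auto simp: G1_def fvecs_def Lc_def Wn_iff)
        qed
        show "\<forall>u u'. (\<forall>i. i \<noteq> 0 \<longrightarrow> u i = u' i) \<longrightarrow> G1 c u = G1 c u'"
          unfolding G1_def by (auto intro!: sum.cong)
      qed
    qed
  qed
  define J where "J = {j. j < k \<and> (\<exists>w0\<in>W0 m k A. w0 j \<noteq> 0)}"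
  define ej where "ej j = (\<lambda>j'::nat. if j' = j then (1::'a) else 0)" for j :: nat
  have Lej: "Lc k (ej j) w = w j" if "j < k" for j w
  proof -
    have "(\<Sum>j'<k. ej j j' * w j' t) = w j t" for t
    proof -
      have "(\<Sum>j'<k. ej j j' * w j' t) = (\<Sum>j'<k. w j' t * (if j' = j then 1 else 0))"
        by (rule sum.cong) (auto simp: ej_def)
      then show ?thesis using that by (simp add: sum_unit)
    qed
    then show ?thesis by (simp add: Lc_def fun_eq_iff)
  qed
  have ej0: "(\<Sum>j'<k. ej j j' * w0 j') = w0 j" if "j < k" for j w0
  proof -
    have "(\<Sum>j'<k. ej j j' * w0 j') = (\<Sum>j'<k. w0 j' * (if j' = j then 1 else 0))"
      by (rule sum.cong) (auto simp: ej_def)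
    then show ?thesis using that by (simp add: sum_unit)
  qed
  define G2 where "G2 j c i0 u = (\<lambda>t. - (\<Sum>i\<in>{..<l} - {i0}. c i * (b i * (a j t + u i j t))) / (c i0 * b i0) - a j t)"
    for j c i0 u
  define B2 where "B2 = (\<Union>j\<in>J. \<Union>i0\<in>{..<l}. \<Union>c\<in>{c\<in>{c::nat\<Rightarrow>'a. \<forall>j\<ge>l. c j = 0}. c i0 \<noteq> 0}.
                            {u\<in>PU. Lc k (ej j) (u i0) = G2 j c i0 u})"
  have B2b: "card B2 * q ^ n \<le> k * (l * (q ^ l * (card ?W * card P ^ (l - 1))))"
    unfolding B2_def
  proof (rule card_UN_mult)
    show "finite J" by (simp add: J_def)
    show "card J \<le> k" using card_mono[of "{..<k}" J] by (auto simp: J_def)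
    show "\<forall>j\<in>J. card (\<Union>i0\<in>{..<l}. \<Union>c\<in>{c\<in>{c::nat\<Rightarrow>'a. \<forall>j\<ge>l. c j = 0}. c i0 \<noteq> 0}.
                            {u\<in>PU. Lc k (ej j) (u i0) = G2 j c i0 u}) * q ^ n
          \<le> l * (q ^ l * (card ?W * card P ^ (l - 1)))"
    proof
      fix j assume "j \<in> J"
      then obtain w0 where j: "j < k" and w0: "w0 \<in> W0 m k A" "w0 j \<noteq> 0" by (auto simp: J_def)
      show "card (\<Union>i0\<in>{..<l}. \<Union>c\<in>{c\<in>{c::nat\<Rightarrow>'a. \<forall>j\<ge>l. c j = 0}. c i0 \<noteq> 0}.
                            {u\<in>PU. Lc k (ej j) (u i0) = G2 j c i0 u}) * q ^ n
          \<le> l * (q ^ l * (card ?W * card P ^ (l - 1)))"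
      proof (rule card_UN_mult)
        show "finite {..<l}" by simp
        show "card {..<l} \<le> l" by simp
        show "\<forall>i0\<in>{..<l}. card (\<Union>c\<in>{c\<in>{c::nat\<Rightarrow>'a. \<forall>j\<ge>l. c j = 0}. c i0 \<noteq> 0}.
                            {u\<in>PU. Lc k (ej j) (u i0) = G2 j c i0 u}) * q ^ n
          \<le> q ^ l * (card ?W * card P ^ (l - 1))"
        proof
          fix i0 assume i0: "i0 \<in> {..<l}"
          show "card (\<Union>c\<in>{c\<in>{c::nat\<Rightarrow>'a. \<forall>j\<ge>l. c j = 0}. c i0 \<noteq> 0}.
                            {u\<in>PU. Lc k (ej j) (u i0) = G2 j c i0 u}) * q ^ n
                \<le> q ^ l * (card ?W * card P ^ (l - 1))"
          proof (rule card_UN_mult)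
            show "finite {c\<in>{c::nat\<Rightarrow>'a. \<forall>j\<ge>l. c j = 0}. c i0 \<noteq> 0}" using finC[of l] by simp
            show "card {c\<in>{c::nat\<Rightarrow>'a. \<forall>j\<ge>l. c j = 0}. c i0 \<noteq> 0} \<le> q ^ l"
              using finC[of l] by (metis (no_types, lifting) card_mono mem_Collect_eq subsetI)
            show "\<forall>c\<in>{c\<in>{c::nat\<Rightarrow>'a. \<forall>j\<ge>l. c j = 0}. c i0 \<noteq> 0}.
                    card {u\<in>PU. Lc k (ej j) (u i0) = G2 j c i0 u} * q ^ n \<le> card ?W * card P ^ (l - 1)"
            proof
              fix c assume "c \<in> {c\<in>{c::nat\<Rightarrow>'a. \<forall>j\<ge>l. c j = 0}. c i0 \<noteq> 0}"
              have nz: "(\<Sum>j'<k. ej j j' * w0 j') \<noteq> 0" using ej0[OF j] w0 by simp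
              show "card {u\<in>PU. Lc k (ej j) (u i0) = G2 j c i0 u} * q ^ n \<le> card ?W * card P ^ (l - 1)"
                unfolding PU_def q_def
              proof (rule count_gen[OF w0(1) nz _ PW])
                show "i0 < l" using i0 by simp
                show "\<forall>u\<in>PiE {..<l} (\<lambda>_. P). G2 j c i0 u \<in> fvecs n"
                proof
                  fix u assume "u \<in> PiE {..<l} (\<lambda>_. P)"
                  then have "\<forall>i<l. u i \<in> ?W" using PW by (auto simp: PiE_iff)
                  then show "G2 j c i0 u \<in> fvecs n" using aV by (auto simp: G2_def fvecs_def Wn_iff Vn_iff)
                qed
                show "\<forall>u u'. (\<forall>i. i \<noteq> i0 \<longrightarrow> u i = u' i) \<longrightarrow> G2 j c i0 u = G2 j c i0 u'"
                  unfolding G2_def by (auto intro!: sum.cong)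
              qed
            qed
          qed
        qed
      qed
    qed
  qed
  have Bsub: "B1 \<union> B2 \<subseteq> PU" by (auto simp: B1_def B2_def)
  have p0: "card P > 0" using key by (cases "card P") auto
  have "card (B1 \<union> B2) * q ^ n \<le> (card B1 + card B2) * q ^ n" using card_Un_le[of B1 B2] by simp
  also have "\<dots> \<le> q ^ k * (card ?W * card P ^ (l - 1)) + k * (l * (q ^ l * (card ?W * card P ^ (l - 1))))"
    using B1b B2b by (simp add: algebra_simps)
  also have "\<dots> = D * card ?W * card P ^ (l - 1)" by (simp add: D_def algebra_simps)
  also have "\<dots> < card P * q ^ n * card P ^ (l - 1)"
    by (rule mult_strict_right_mono[OF key]) (simp add: p0)
  also have "\<dots> = card PU * q ^ n"
  proof -
    have "card P ^ l = card P * card P ^ (l - 1)" using l by (cases l) auto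
    then show ?thesis using cPU by (simp add: algebra_simps)
  qed
  finally have lt: "card (B1 \<union> B2) < card PU" by simp
  have "\<not> PU \<subseteq> B1 \<union> B2"
  proof
    assume "PU \<subseteq> B1 \<union> B2"
    then have "card PU \<le> card (B1 \<union> B2)" using finite_subset[OF Bsub finPU] by (rule card_mono[rotated])
    then show False using lt by simp
  qed
  then obtain u where uPU: "u \<in> PU" and nB1: "u \<notin> B1" and nB2: "u \<notin> B2" by blast
  define y where "y = (\<lambda>j t. \<Sum>i<l. b i * u i j t)"
  have yW: "y \<in> ?W" unfolding y_def by (rule Wn_comb) (use uW[OF uPU] in blast)
  have sol: "is_solution m k A y" using yW by (simp add: Wn_def)
  have gen: "lin_generic m k A y"
    unfolding lin_generic_def
  proof (intro allI impI)
    fix c :: "nat \<Rightarrow> 'a"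
    assume hc: "vsum {..<k} (\<lambda>j. vscale (c j) (y j)) = (\<lambda>_. 0)"
    define c' where "c' j = (if j < k then c j else 0)" for j
    have c'C: "c' \<in> {c::nat\<Rightarrow>'a. \<forall>j\<ge>k. c j = 0}" by (simp add: c'_def)
    have sc: "(\<Sum>j<k. c' j * f j) = (\<Sum>j<k. c j * f j)" for f :: "nat \<Rightarrow> 'a"
      by (rule sum.cong) (auto simp: c'_def)
    have Ly: "Lc k c' y = 0"
    proof
      fix t
      have "(\<Sum>j<k. c j * y j t) = 0" using fun_cong[OF hc, of t] by (simp add: vsum_def vscale_def)
      then show "Lc k c' y t = 0 t" by (simp add: Lc_def sc)
    qed
    show "\<exists>d. \<forall>j<k. c j = (\<Sum>i<m. d i * A i j)"
    proof (cases "\<exists>w0\<in>W0 m k A. (\<Sum>j<k. c' j * w0 j) \<noteq> 0")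
      case True
      then have cg: "c' \<in> Cg" using c'C by (simp add: Cg_def)
      have "Lc k c' (u 0) = G1 c' u"
      proof
        fix t
        have "Lc k c' y t = (\<Sum>i<l. b i * Lc k c' (u i) t)"
          by (simp add: Lc_def y_def sum_distrib_left sum.swap[of _ "{..<k}"] algebra_simps)
        also have "\<dots> = b 0 * Lc k c' (u 0) t + (\<Sum>i\<in>{..<l} - {0}. b i * Lc k c' (u i) t)"
          using l by (subst sum.remove[of _ 0]) auto
        finally have "b 0 * Lc k c' (u 0) t + (\<Sum>i\<in>{..<l} - {0}. b i * Lc k c' (u i) t) = 0"
          using Ly by simp
        moreover have "b 0 \<noteq> 0" using bnz l by simp
        ultimately show "Lc k c' (u 0) t = G1 c' u t" unfolding G1_def by (simp add: field_simps eq_neg_iff_add_eq_0)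
      qed
      then have "u \<in> B1" using cg uPU by (auto simp: B1_def)
      then show ?thesis using nB1 by blast
    next
      case False
      have "\<exists>d. \<forall>j<k. c' j = (\<Sum>i<m. d i * A i j)"
      proof (rule duality, intro allI impI)
        fix w :: "nat \<Rightarrow> 'a" assume hw: "\<forall>i<m. (\<Sum>j<k. A i j * w j) = 0"
        define w' where "w' j = (if j < k then w j else 0)" for j
        have sw: "(\<Sum>j<k. f j * w' j) = (\<Sum>j<k. f j * w j)" for f :: "nat \<Rightarrow> 'a"
          by (rule sum.cong) (auto simp: w'_def)
        have "w' \<in> W0 m k A" using hw by (simp add: W0_def sw) (simp add: w'_def)
        then have "(\<Sum>j<k. c' j * w' j) = 0" using False by blast
        then show "(\<Sum>j<k. c' j * w j) = 0" by (simp add: sw)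
      qed
      then show ?thesis by (auto simp: c'_def)
    qed
  qed
  have mem: "y j \<in> aff_sumset l (\<lambda>i. set_scale (b i) S) \<union> {\<lambda>_. 0}" if j: "j < k" for j
  proof (cases "j \<in> J")
    case False
    have z: "w j t = 0" if "w \<in> ?W" for w t
    proof -
      have "(\<lambda>j'. w j' t) \<in> W0 m k A" using that by (auto simp: W0_def Wn_iff)
      then show ?thesis using False j by (auto simp: J_def)
    qed
    have "y j = (\<lambda>_. 0)"
    proof
      fix t show "y j t = 0" unfolding y_def
        by (rule sum.neutral) (use z uW[OF uPU] in auto)
    qed
    then show ?thesis by simp
  next
    case True
    show ?thesis
    proof (cases "y j = (\<lambda>_. 0)")
      case True then show ?thesis by simp
    next
      case yne: False
      define X where "X i = vscale (b i) (a j + u i j)" for i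
      have aind: "aff_indep l X"
      proof (rule ccontr)
        assume "\<not> aff_indep l X"
        then obtain c i0 where c0: "vsum {..<l} (\<lambda>i. vscale (c i) (X i)) = (\<lambda>_. 0)"
          and i0: "i0 < l" "c i0 \<noteq> 0"
          unfolding aff_indep_def by blast
        define c' where "c' i = (if i < l then c i else 0)" for i
        have c'C: "c' \<in> {c\<in>{c::nat\<Rightarrow>'a. \<forall>j\<ge>l. c j = 0}. c i0 \<noteq> 0}" using i0 by (simp add: c'_def)
        have "Lc k (ej j) (u i0) = G2 j c' i0 u"
        proof
          fix t
          have "(\<Sum>i<l. c i * (b i * (a j t + u i j t))) = 0"
            using fun_cong[OF c0, of t] by (simp add: vsum_def vscale_def X_def)
          moreover have "(\<Sum>i<l. c i * (b i * (a j t + u i j t))) = (\<Sum>i<l. c' i * (b i * (a j t + u i j t)))"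
            by (rule sum.cong) (auto simp: c'_def)
          moreover have "(\<Sum>i<l. c' i * (b i * (a j t + u i j t))) =
               c' i0 * (b i0 * (a j t + u i0 j t)) + (\<Sum>i\<in>{..<l} - {i0}. c' i * (b i * (a j t + u i j t)))"
            using i0 by (subst sum.remove[of _ i0]) auto
          ultimately have e: "c' i0 * (b i0 * (a j t + u i0 j t)) + (\<Sum>i\<in>{..<l} - {i0}. c' i * (b i * (a j t + u i j t))) = 0"
            by simp
          have nz: "c' i0 * b i0 \<noteq> 0" using i0 bnz by (simp add: c'_def)
          have "u i0 j t = G2 j c' i0 u t" unfolding G2_def using e nz
            by (simp add: field_simps eq_neg_iff_add_eq_0)
          then show "Lc k (ej j) (u i0) t = G2 j c' i0 u t" using Lej[OF j] by simp
        qed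
        then have "u \<in> B2" using \<open>j \<in> J\<close> i0 c'C uPU unfolding B2_def by blast
        then show False using nB2 by blast
      qed
      have XS: "X i \<in> set_scale (b i) S" if "i < l" for i
      proof -
        have "u i \<in> P" using uPU that by (auto simp: PU_def PiE_iff)
        then have "a + u i \<in> Z" by (simp add: P_def)
        then have "a j + u i j \<in> S" using j by (simp add: Z_def)
        then show ?thesis by (simp add: X_def set_scale_def)
      qed
      have "vsum {..<l} X = y j"
      proof
        fix t
        have "vsum {..<l} X t = (\<Sum>i<l. b i * a j t + b i * u i j t)"
          by (simp add: vsum_def X_def vscale_def algebra_simps)
        also have "\<dots> = (\<Sum>i<l. b i) * a j t + y j t"
          by (simp add: sum.distrib sum_distrib_right y_def)
        finally show "vsum {..<l} X t = y j t" using bsum by simp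
      qed
      then have "y j \<in> aff_sumset l (\<lambda>i. set_scale (b i) S)"
        unfolding aff_sumset_def
      proof (intro CollectI exI conjI)
        show "y j = vsum {..<l} X" using \<open>vsum {..<l} X = y j\<close> by simp
      qed (use XS aind in auto)
      then show ?thesis by simp
    qed
  qed
  show ?thesis using sol gen mem by blast
qed


theorem corollaryD:
  fixes A :: "nat \<Rightarrow> nat \<Rightarrow> 'a::{finite,field}"
    and m k l :: nat and b :: "nat \<Rightarrow> 'a"
  assumes "l \<ge> 1"
    and "\<forall>i<l. b i \<noteq> 0"
    and "(\<Sum>i<l. b i) = 0"
  shows "\<exists>\<beta> \<gamma> :: real. \<beta> \<ge> 1 \<and> \<gamma> \<ge> 1 \<and> \<gamma> < real (card (UNIV :: 'a set)) \<and>
     (\<forall>n. \<forall>S \<subseteq> fvecs n. real (card S) \<ge> \<beta> * \<gamma> ^ n \<longrightarrow>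
        (\<exists>y. is_solution m k A y \<and> lin_generic m k A y \<and>
             (\<forall>j<k. y j \<in> aff_sumset l (\<lambda>i. set_scale (b i) S) \<union> {\<lambda>_. 0})))"
proof -
  define q where "q = card (UNIV :: 'a set)"
  have q2: "q \<ge> 2"
  proof -
    have "card {0::'a, 1} = 2" by simp
    moreover have "card {0::'a, 1} \<le> q" unfolding q_def by (rule card_mono) auto
    ultimately show ?thesis by simp
  qed
  show ?thesis
  proof (cases "k = 0")
    case True
    have "\<exists>y. is_solution m k A y \<and> lin_generic m k A y \<and>
             (\<forall>j<k. y j \<in> aff_sumset l (\<lambda>i. set_scale (b i) S) \<union> {\<lambda>_. 0})" for S
      using True by (auto simp: is_solution_def lin_generic_def vsum_def)
    moreover have "(1::real) < real q" using q2 by simp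
    ultimately show ?thesis unfolding q_def by (intro exI[of _ 1]) auto
  next
    case False
    then have k: "k \<ge> 1" by simp
    define D where "D = q ^ k + k * l * q ^ l"
    have rp: "1 \<le> real q * (1 - 1 / (2 * real k))" "real q * (1 - 1 / (2 * real k)) < real q"
      using real_part[OF q2 k] by auto
    have "\<forall>n. \<forall>S \<subseteq> fvecs n. real (card S) \<ge> (real D + 1) * (real q * (1 - 1 / (2 * real k))) ^ n \<longrightarrow>
        (\<exists>y. is_solution m k A y \<and> lin_generic m k A y \<and>
             (\<forall>j<k. y j \<in> aff_sumset l (\<lambda>i. set_scale (b i) S) \<union> {\<lambda>_. 0}))"
    proof (intro allI impI)
      fix n and S :: "(nat \<Rightarrow> 'a) set"
      assume S: "S \<subseteq> fvecs n" and big: "real (card S) \<ge> (real D + 1) * (real q * (1 - 1 / (2 * real k))) ^ n"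
      have "D * q ^ (n * (k - 1)) < card S ^ k" using real_part(3)[OF q2 k big] .
      then show "\<exists>y. is_solution m k A y \<and> lin_generic m k A y \<and>
             (\<forall>j<k. y j \<in> aff_sumset l (\<lambda>i. set_scale (b i) S) \<union> {\<lambda>_. 0})"
        using main_count[OF assms S k] by (simp add: D_def q_def)
    qed
    then show ?thesis using rp unfolding q_def
      by (intro exI[of _ "real D + 1"] exI[of _ "real q * (1 - 1 / (2 * real k))"]) (auto simp: q_def)
  qed
qed

end
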